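(* Almost every $n$-vertex graph can be reconstructed (up to isomorphism) from its induced subgraphs with $3\log_2 n$ vertices; i.e. for almost every $n$-vertex graph $G$, any $n$-vertex graph $G'$ whose multiset of $3\log_2 n$-vertex induced subgraphs equals that of $G$ is isomorphic to $G$.
   Context: Graphs are finite, simple, undirected; all subgraphs are induced subgraphs, and the multiset of subgraphs records each isomorphism type with its multiplicity. "Almost every $n$-vertex graph has property $Q$" means: in the random graph on $n$ labeled vertices where each edge is present independently with probability $1/2$, the probability of $Q$ tends to $1$ as $n\to\infty$. *)

theory Defs
  imports Complex_Main "HOL-Library.Multiset"
begin

text \<open>A finite simple graph is a pair (vertex set, edge set), edges being 2-element
  vertex sets.  Labeled graphs on n vertices have vertex set {0..<n} and are
  identified with their edge sets.\<close>

type_synonym graph = "nat set \<times> nat set set"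

definition graphs_on :: "nat \<Rightarrow> nat set set set" where
  "graphs_on n = {E. E \<subseteq> {e. e \<subseteq> {0..<n} \<and> card e = 2}}"

definition induced :: "nat set set \<Rightarrow> nat set \<Rightarrow> graph" where
  "induced E S = (S, {e \<in> E. e \<subseteq> S})"

definition graph_iso :: "graph \<Rightarrow> graph \<Rightarrow> bool" where
  "graph_iso G H \<longleftrightarrow> (\<exists>f. bij_betw f (fst G) (fst H) \<and>
     (\<forall>u\<in>fst G. \<forall>v\<in>fst G. {u, v} \<in> snd G \<longleftrightarrow> {f u, f v} \<in> snd H))"

definition iso_class :: "graph \<Rightarrow> graph set" where
  "iso_class G = {H. graph_iso G H}"

definition deck :: "nat \<Rightarrow> nat \<Rightarrow> nat set set \<Rightarrow> graph set multiset" where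
  "deck n k E = image_mset (\<lambda>S. iso_class (induced E S))
                  (mset_set {S. S \<subseteq> {0..<n} \<and> card S = k})"

definition reconstructible :: "nat \<Rightarrow> nat \<Rightarrow> nat set set \<Rightarrow> bool" where
  "reconstructible n k E \<longleftrightarrow>
     (\<forall>E' \<in> graphs_on n. deck n k E' = deck n k E \<longrightarrow> graph_iso ({0..<n}, E') ({0..<n}, E))"

end

theory Submission
  imports Defs "HOL-Library.FuncSet" "HOL-Real_Asymp.Real_Asymp"
begin

lemma graph_iso_refl: "graph_iso G G"
  unfolding graph_iso_def by (intro exI[of _ id]) auto

lemma graph_iso_sym: assumes "graph_iso G H" shows "graph_iso H G"
proof -
  obtain f where f: "bij_betw f (fst G) (fst H)"
    and e: "\<forall>u\<in>fst G. \<forall>v\<in>fst G. {u, v} \<in> snd G \<longleftrightarrow> {f u, f v} \<in> snd H"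
    using assms unfolding graph_iso_def by blast
  let ?g = "inv_into (fst G) f"
  have g: "bij_betw ?g (fst H) (fst G)" using f by (rule bij_betw_inv_into)
  have "\<forall>u\<in>fst H. \<forall>v\<in>fst H. {u, v} \<in> snd H \<longleftrightarrow> {?g u, ?g v} \<in> snd G"
  proof (intro ballI)
    fix u v assume u: "u \<in> fst H" and v: "v \<in> fst H"
    have gu: "?g u \<in> fst G" "f (?g u) = u" using u f g bij_betw_apply bij_betw_inv_into_right by metis+
    have gv: "?g v \<in> fst G" "f (?g v) = v" using v f g bij_betw_apply bij_betw_inv_into_right by metis+
    show "{u, v} \<in> snd H \<longleftrightarrow> {?g u, ?g v} \<in> snd G" using e gu gv by metis
  qed
  then show ?thesis using g unfolding graph_iso_def by blast
qed

lemma graph_iso_trans: assumes "graph_iso G H" "graph_iso H K" shows "graph_iso G K"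
proof -
  obtain f where f: "bij_betw f (fst G) (fst H)"
    and e: "\<forall>u\<in>fst G. \<forall>v\<in>fst G. {u, v} \<in> snd G \<longleftrightarrow> {f u, f v} \<in> snd H"
    using assms unfolding graph_iso_def by blast
  obtain g where g: "bij_betw g (fst H) (fst K)"
    and e2: "\<forall>u\<in>fst H. \<forall>v\<in>fst H. {u, v} \<in> snd H \<longleftrightarrow> {g u, g v} \<in> snd K"
    using assms unfolding graph_iso_def by blast
  have "bij_betw (g \<circ> f) (fst G) (fst K)" using f g by (rule bij_betw_trans)
  moreover have "\<forall>u\<in>fst G. \<forall>v\<in>fst G. {u, v} \<in> snd G \<longleftrightarrow> {(g\<circ>f) u, (g\<circ>f) v} \<in> snd K"
  proof (intro ballI)
    fix u v assume uv: "u \<in> fst G" "v \<in> fst G"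
    then have "f u \<in> fst H" "f v \<in> fst H" using f bij_betw_apply by metis+
    then show "{u, v} \<in> snd G \<longleftrightarrow> {(g\<circ>f) u, (g\<circ>f) v} \<in> snd K"
      using e e2 uv by simp
  qed
  ultimately show ?thesis unfolding graph_iso_def by blast
qed

lemma iso_class_eq_iff: "iso_class G = iso_class H \<longleftrightarrow> graph_iso G H"
proof
  assume "iso_class G = iso_class H"
  then have "H \<in> iso_class G" using graph_iso_refl unfolding iso_class_def by blast
  then show "graph_iso G H" unfolding iso_class_def by simp
next
  assume h: "graph_iso G H"
  show "iso_class G = iso_class H" unfolding iso_class_def
    using h graph_iso_sym graph_iso_trans by blast
qed

definition fam :: "nat \<Rightarrow> graph set \<Rightarrow> graph \<Rightarrow> nat set set" where
  "fam l C G = {T. T \<subseteq> fst G \<and> card T = l \<and> iso_class (induced (snd G) T) = C}"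

lemma graph_iso_finite: "graph_iso G H \<Longrightarrow> finite (fst G) \<Longrightarrow> finite (fst H)"
  unfolding graph_iso_def using bij_betw_finite by blast

lemma fam_le:
  assumes "graph_iso G H" "finite (fst G)"
  shows "card (fam l C G) \<le> card (fam l C H)"
proof -
  obtain f where f: "bij_betw f (fst G) (fst H)"
    and e: "\<forall>u\<in>fst G. \<forall>v\<in>fst G. {u, v} \<in> snd G \<longleftrightarrow> {f u, f v} \<in> snd H"
    using assms unfolding graph_iso_def by blast
  have inj: "inj_on f (fst G)" using f bij_betw_def by blast
  have "inj_on (image f) (fam l C G)"
    by (rule inj_on_subset[OF inj_on_image_Pow[OF inj]]) (auto simp: fam_def)
  moreover have "image f ` fam l C G \<subseteq> fam l C H"
  proof
    fix X assume "X \<in> image f ` fam l C G"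
    then obtain T where T: "T \<in> fam l C G" "X = f ` T" by blast
    have TS: "T \<subseteq> fst G" "card T = l" "iso_class (induced (snd G) T) = C" using T by (auto simp: fam_def)
    have XS: "X \<subseteq> fst H" using TS T f bij_betw_imp_surj_on by blast
    have injT: "inj_on f T" using inj TS inj_on_subset by blast
    have cX: "card X = l" using T TS card_image injT by metis
    have "graph_iso (induced (snd G) T) (induced (snd H) X)"
      unfolding graph_iso_def induced_def
    proof (intro exI[of _ f] conjI)
      show "bij_betw f (fst (T, {e \<in> snd G. e \<subseteq> T})) (fst (X, {e \<in> snd H. e \<subseteq> X}))"
        using injT T by (simp add: bij_betw_def)
      show "\<forall>u\<in>fst (T, {e \<in> snd G. e \<subseteq> T}). \<forall>v\<in>fst (T, {e \<in> snd G. e \<subseteq> T}).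
          ({u, v} \<in> snd (T, {e \<in> snd G. e \<subseteq> T})) = ({f u, f v} \<in> snd (X, {e \<in> snd H. e \<subseteq> X}))"
        using e TS T by auto
    qed
    then have "iso_class (induced (snd H) X) = C" using TS iso_class_eq_iff by metis
    then show "X \<in> fam l C H" using XS cX by (simp add: fam_def)
  qed
  moreover have "finite (fam l C H)" using graph_iso_finite[OF assms] unfolding fam_def
    by (rule finite_subset[rotated, OF finite_Pow_iff[THEN iffD2]]) auto
  ultimately show ?thesis by (meson card_inj_on_le)
qed

lemma fam_eq: "graph_iso G H \<Longrightarrow> finite (fst G) \<Longrightarrow> card (fam l C G) = card (fam l C H)"
  by (meson antisym fam_le graph_iso_sym graph_iso_finite)

definition kset :: "nat \<Rightarrow> nat \<Rightarrow> nat set set" where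
  "kset n k = {S. S \<subseteq> {0..<n} \<and> card S = k}"

lemma finite_kset[simp]: "finite (kset n k)"
  unfolding kset_def by (rule finite_subset[of _ "Pow {0..<n}"]) auto

lemma card_supersets:
  assumes "T \<subseteq> U" "finite U" "card T = l" "l \<le> k"
  shows "card {S. S \<subseteq> U \<and> card S = k \<and> T \<subseteq> S} = (card U - l) choose (k - l)"
proof -
  have fT: "finite T" using assms finite_subset by blast
  have "bij_betw (\<lambda>S. S - T) {S. S \<subseteq> U \<and> card S = k \<and> T \<subseteq> S} {V. V \<subseteq> U - T \<and> card V = k - l}"
  proof (rule bij_betwI[where g = "\<lambda>V. V \<union> T"])
    show "(\<lambda>S. S - T) \<in> {S. S \<subseteq> U \<and> card S = k \<and> T \<subseteq> S} \<rightarrow> {V. V \<subseteq> U - T \<and> card V = k - l}"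
      using assms fT by (auto simp: card_Diff_subset)
    show "(\<lambda>V. V \<union> T) \<in> {V. V \<subseteq> U - T \<and> card V = k - l} \<rightarrow> {S. S \<subseteq> U \<and> card S = k \<and> T \<subseteq> S}"
    proof
      fix V assume V: "V \<in> {V. V \<subseteq> U - T \<and> card V = k - l}"
      then have "finite V" using assms finite_subset by blast
      then have "card (V \<union> T) = card V + card T" using V fT by (intro card_Un_disjoint) auto
      then show "V \<union> T \<in> {S. S \<subseteq> U \<and> card S = k \<and> T \<subseteq> S}" using V assms by auto
    qed
  qed auto
  then have "card {S. S \<subseteq> U \<and> card S = k \<and> T \<subseteq> S} = card {V. V \<subseteq> U - T \<and> card V = k - l}"
    by (rule bij_betw_same_card)
  also have "\<dots> = card (U - T) choose (k - l)" using assms by (intro n_subsets) auto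
  also have "card (U - T) = card U - l" using assms fT by (simp add: card_Diff_subset)
  finally show ?thesis .
qed

lemma induced_induced: "T \<subseteq> S \<Longrightarrow> induced (snd (induced E S)) T = induced E T"
  unfolding induced_def by auto

definition hcount :: "nat \<Rightarrow> graph set \<Rightarrow> graph set \<Rightarrow> nat" where
  "hcount l C X = card (fam l C (SOME G. G \<in> X))"

lemma hcount_eq:
  assumes "finite S"
  shows "hcount l C (iso_class (induced E S)) = card {T \<in> fam l C (UNIV, E). T \<subseteq> S}"
proof -
  let ?G = "SOME G. G \<in> iso_class (induced E S)"
  have "induced E S \<in> iso_class (induced E S)" by (simp add: iso_class_def graph_iso_refl)
  then have "?G \<in> iso_class (induced E S)" by (rule someI)
  then have gi: "graph_iso (induced E S) ?G" by (simp add: iso_class_def)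
  have "hcount l C (iso_class (induced E S)) = card (fam l C (induced E S))"
    unfolding hcount_def using fam_eq[OF gi] assms by (simp add: induced_def)
  also have "fam l C (induced E S) = {T \<in> fam l C (UNIV, E). T \<subseteq> S}"
    unfolding fam_def using induced_induced[of _ S E] by (auto simp: induced_def)
  finally show ?thesis .
qed

lemma kelly:
  assumes deck: "deck n k E = deck n k E'" and lk: "l \<le> k" and kn: "k \<le> n"
  shows "card (fam l C ({0..<n}, E)) = card (fam l C ({0..<n}, E'))"
proof -
  have key: "(\<Sum>S\<in>kset n k. hcount l C (iso_class (induced F S)))
      = card (fam l C ({0..<n}, F)) * ((n - l) choose (k - l))" for F
  proof -
    let ?F = "fam l C ({0..<n}, F)"
    have fF: "finite ?F" unfolding fam_def by (rule finite_subset[of _ "Pow {0..<n}"]) auto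
    have "(\<Sum>S\<in>kset n k. hcount l C (iso_class (induced F S)))
        = (\<Sum>S\<in>kset n k. \<Sum>T\<in>?F. if T \<subseteq> S then 1 else 0)"
    proof (rule sum.cong[OF refl])
      fix S assume S: "S \<in> kset n k"
      then have fS: "finite S" unfolding kset_def using finite_subset by blast
      have "{T \<in> fam l C (UNIV, F). T \<subseteq> S} = {T \<in> ?F. T \<subseteq> S}"
        using S unfolding fam_def kset_def by auto
      then show "hcount l C (iso_class (induced F S)) = (\<Sum>T\<in>?F. if T \<subseteq> S then 1 else 0)"
        using hcount_eq[OF fS] fF by (simp add: sum.If_cases Int_def)
    qed
    also have "\<dots> = (\<Sum>T\<in>?F. \<Sum>S\<in>kset n k. if T \<subseteq> S then 1 else 0)"
      by (rule sum.swap)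
    also have "\<dots> = (\<Sum>T\<in>?F. (n - l) choose (k - l))"
    proof (rule sum.cong[OF refl])
      fix T assume T: "T \<in> ?F"
      have "(\<Sum>S\<in>kset n k. if T \<subseteq> S then 1 else 0) = card {S \<in> kset n k. T \<subseteq> S}"
        by (simp add: sum.If_cases Int_def)
      also have "{S \<in> kset n k. T \<subseteq> S} = {S. S \<subseteq> {0..<n} \<and> card S = k \<and> T \<subseteq> S}"
        unfolding kset_def by auto
      also have "card \<dots> = (card {0..<n} - l) choose (k - l)"
        using T lk by (intro card_supersets) (auto simp: fam_def)
      finally show "(\<Sum>S\<in>kset n k. if T \<subseteq> S then 1 else 0) = (n - l) choose (k - l)" by simp
    qed
    finally show ?thesis by simp
  qed
  have "(\<Sum>S\<in>kset n k. hcount l C (iso_class (induced F S))) = sum_mset (image_mset (hcount l C) (deck n k F))" for F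
    unfolding deck_def kset_def sum_unfold_sum_mset by (simp add: image_mset.compositionality o_def)
  then have "card (fam l C ({0..<n}, E)) * ((n - l) choose (k - l)) = card (fam l C ({0..<n}, E')) * ((n - l) choose (k - l))"
    using key deck by metis
  moreover have "(n - l) choose (k - l) > 0" using lk kn by simp
  ultimately show ?thesis by simp
qed

lemma iso_induced_D:
  assumes "graph_iso (induced E S) (induced E' S')"
  obtains g where "bij_betw g S S'" "\<And>u v. u \<in> S \<Longrightarrow> v \<in> S \<Longrightarrow> {u, v} \<in> E \<longleftrightarrow> {g u, g v} \<in> E'"
proof -
  obtain g where g: "bij_betw g S S'"
    and e: "\<forall>u\<in>S. \<forall>v\<in>S. {u, v} \<in> {e\<in>E. e \<subseteq> S} \<longleftrightarrow> {g u, g v} \<in> {e\<in>E'. e \<subseteq> S'}"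
    using assms unfolding graph_iso_def induced_def by auto
  have "u \<in> S \<Longrightarrow> v \<in> S \<Longrightarrow> {u, v} \<in> E \<longleftrightarrow> {g u, g v} \<in> E'" for u v
    using e g bij_betw_apply[OF g] by auto
  then show ?thesis using that g by blast
qed

lemma iso_induced_E:
  assumes "graph_iso (induced E S) (induced E' S')"
  shows "\<exists>g. bij_betw g S S' \<and> (\<forall>u\<in>S. \<forall>v\<in>S. {u, v} \<in> E \<longleftrightarrow> {g u, g v} \<in> E')"
  using iso_induced_D[OF assms] by metis

lemma iso_induced_I:
  assumes "inj_on g S" "\<And>u v. u \<in> S \<Longrightarrow> v \<in> S \<Longrightarrow> {u, v} \<in> E \<longleftrightarrow> {g u, g v} \<in> E'"
  shows "graph_iso (induced E S) (induced E' (g ` S))"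
  unfolding graph_iso_def induced_def using assms by (auto simp: bij_betw_def)

definition emb :: "nat set set \<Rightarrow> nat set \<Rightarrow> (nat \<Rightarrow> nat) \<Rightarrow> bool" where
  "emb E A \<psi> \<longleftrightarrow> (\<forall>u\<in>A. \<forall>v\<in>A. u \<noteq> v \<longrightarrow> ({u, v} \<in> E \<longleftrightarrow> {\<psi> u, \<psi> v} \<in> E))"

definition rigid :: "nat \<Rightarrow> nat set set \<Rightarrow> nat set \<Rightarrow> bool" where
  "rigid n E A \<longleftrightarrow> (\<forall>\<psi>. \<psi> ` A \<subseteq> {0..<n} \<and> inj_on \<psi> A \<and> emb E A \<psi> \<longrightarrow> (\<forall>u\<in>A. \<psi> u = u))"

definition dcodes :: "nat \<Rightarrow> nat set set \<Rightarrow> nat set \<Rightarrow> bool" where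
  "dcodes n E A \<longleftrightarrow> (\<forall>v\<in>{0..<n}-A. \<forall>w\<in>{0..<n}-A. v \<noteq> w \<longrightarrow> (\<exists>u\<in>A. ({u, v} \<in> E) \<noteq> ({u, w} \<in> E)))"

lemma recon:
  assumes E: "E \<in> graphs_on n" and A: "A \<subseteq> {0..<n}" and k: "card A + 2 = k" and kn: "k \<le> n"
    and rig: "rigid n E A" and dc: "dcodes n E A"
  shows "reconstructible n k E"
  unfolding reconstructible_def
proof (intro ballI impI)
  fix E' assume E': "E' \<in> graphs_on n" and dk: "deck n k E' = deck n k E"
  define V where "V = {0..<n}"
  define a where "a = card A"
  define C where "C = iso_class (induced E A)"
  have fA: "finite A" using A finite_subset by blast
  have AV: "A \<subseteq> V" using A V_def by simp
  have famE: "fam a C (V, E) = {A}"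
  proof
    show "{A} \<subseteq> fam a C (V, E)" using AV by (simp add: fam_def a_def C_def)
    show "fam a C (V, E) \<subseteq> {A}"
    proof
      fix T assume "T \<in> fam a C (V, E)"
      then have T: "T \<subseteq> V" "card T = a" "iso_class (induced E T) = C" by (auto simp: fam_def)
      then have "graph_iso (induced E A) (induced E T)" unfolding C_def using iso_class_eq_iff by metis
      then obtain g where g: "bij_betw g A T" "\<And>u v. u \<in> A \<Longrightarrow> v \<in> A \<Longrightarrow> {u, v} \<in> E \<longleftrightarrow> {g u, g v} \<in> E"
        using iso_induced_E by blast
      have "g ` A \<subseteq> {0..<n}" "inj_on g A" "emb E A g"
        using g T V_def unfolding emb_def bij_betw_def by auto
      then have "\<forall>u\<in>A. g u = u" using rig unfolding rigid_def by blast
      then have "T = A" using g(1) unfolding bij_betw_def by auto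
      then show "T \<in> {A}" by simp
    qed
  qed
  have "card (fam a C (V, E')) = card (fam a C (V, E))"
    unfolding V_def by (rule kelly[OF dk]) (use k kn a_def in auto)
  then have "card (fam a C (V, E')) = 1" using famE by simp
  then obtain A' where famE': "fam a C (V, E') = {A'}" by (rule card_1_singletonE)
  have A': "A' \<subseteq> V" "card A' = a" "graph_iso (induced E A) (induced E' A')"
  proof -
    have "A' \<in> fam a C (V, E')" using famE' by simp
    then have "A' \<subseteq> V" "card A' = a" "iso_class (induced E' A') = iso_class (induced E A)"
      unfolding fam_def C_def by auto
    then show "A' \<subseteq> V" "card A' = a" "graph_iso (induced E A) (induced E' A')"
      using iso_class_eq_iff by metis+
  qed
  have uniq: "T = A'" if "T \<subseteq> V" "card T = a" "graph_iso (induced E A) (induced E' T)" for T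
  proof -
    have "iso_class (induced E' T) = C" unfolding C_def using that(3) iso_class_eq_iff by metis
    then have "T \<in> fam a C (V, E')" using that unfolding fam_def by simp
    then show ?thesis using famE' by blast
  qed
  obtain \<phi> where \<phi>: "bij_betw \<phi> A A'" "\<And>u v. u \<in> A \<Longrightarrow> v \<in> A \<Longrightarrow> {u, v} \<in> E \<longleftrightarrow> {\<phi> u, \<phi> v} \<in> E'"
    using iso_induced_E[OF A'(3)] by blast
  define c where "c v = {u\<in>A. {u, v} \<in> E}" for v
  define c' where "c' x = {u\<in>A. {\<phi> u, x} \<in> E'}" for x
  have step2: "\<exists>g. (\<forall>x\<in>A\<union>{v,w}. \<forall>y\<in>A\<union>{v,w}. {x, y} \<in> E \<longleftrightarrow> {g x, g y} \<in> E')
       \<and> g v \<in> V - A' \<and> g w \<in> V - A' \<and> c' (g v) = c v \<and> c' (g w) = c w"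
    if vw: "v \<in> V - A" "w \<in> V - A" "v \<noteq> w" for v w
  proof -
    define S where "S = A \<union> {v, w}"
    have cS: "card S = k" using vw fA k a_def unfolding S_def by (simp add: card_insert_if)
    have SK: "S \<in> kset n k" using cS vw AV unfolding S_def kset_def V_def by auto
    have "iso_class (induced E S) \<in># deck n k E" unfolding deck_def using SK by (simp add: kset_def)
    then have "iso_class (induced E S) \<in># deck n k E'" using dk by simp
    then obtain S' where S': "S' \<in> kset n k" "iso_class (induced E' S') = iso_class (induced E S)"
      unfolding deck_def kset_def by auto
    have "graph_iso (induced E S) (induced E' S')" using S'(2) iso_class_eq_iff by metis
    then obtain g where g: "bij_betw g S S'" "\<And>x y. x \<in> S \<Longrightarrow> y \<in> S \<Longrightarrow> {x, y} \<in> E \<longleftrightarrow> {g x, g y} \<in> E'"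
      using iso_induced_E by blast
    have injS: "inj_on g S" using g(1) bij_betw_def by blast
    have injA: "inj_on g A" using injS S_def inj_on_subset by blast
    have S'V: "S' \<subseteq> V" using S' unfolding kset_def V_def by auto
    have gAV: "g ` A \<subseteq> V" using g(1) S'V S_def bij_betw_imp_surj_on by blast
    have giso: "graph_iso (induced E A) (induced E' (g ` A))"
      using injA g(2) S_def by (intro iso_induced_I) auto
    have cgA: "card (g ` A) = a" using card_image[OF injA] unfolding a_def .
    have gA: "g ` A = A'" by (rule uniq[OF gAV cgA giso])
    define \<psi> where "\<psi> = inv_into A \<phi> \<circ> g"
    have phA: "\<phi> ` A = A'" using \<phi>(1) by (simp add: bij_betw_def)
    have psiA: "\<psi> u \<in> A" "\<phi> (\<psi> u) = g u" if "u \<in> A" for u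
    proof -
      have "g u \<in> A'" using gA that by blast
      then have gu: "g u \<in> \<phi> ` A" using phA by simp
      show "\<psi> u \<in> A" unfolding \<psi>_def using inv_into_into[OF gu] by simp
      show "\<phi> (\<psi> u) = g u" unfolding \<psi>_def using f_inv_into_f[OF gu] by simp
    qed
    have "\<psi> ` A \<subseteq> {0..<n}" using psiA A by blast
    moreover have "inj_on \<psi> A"
      using psiA injA unfolding inj_on_def by metis
    moreover have "emb E A \<psi>" unfolding emb_def
    proof (intro ballI impI)
      fix x y assume "x \<in> A" "y \<in> A" "x \<noteq> y"
      then show "{x, y} \<in> E \<longleftrightarrow> {\<psi> x, \<psi> y} \<in> E"
        using \<phi>(2)[of "\<psi> x" "\<psi> y"] psiA g(2) S_def by auto
    qed
    ultimately have "\<forall>u\<in>A. \<psi> u = u" using rig unfolding rigid_def by blast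
    then have gphi: "\<forall>u\<in>A. g u = \<phi> u" using psiA by metis
    have notA': "g x \<notin> A'" if "x \<in> {v, w}" for x
    proof
      assume "g x \<in> A'"
      then obtain u where "u \<in> A" "g u = g x" using gA by auto
      then have "u = x" using injS that S_def unfolding inj_on_def by blast
      then show False using \<open>u \<in> A\<close> that vw by auto
    qed
    have inV: "g x \<in> V" if "x \<in> {v, w}" for x
    proof -
      have "x \<in> S" using that S_def by auto
      then have "g x \<in> S'" by (rule bij_betw_apply[OF g(1)])
      then show ?thesis using S'V by blast
    qed
    have code: "c' (g x) = c x" if "x \<in> {v, w}" for x
      unfolding c_def c'_def using g(2) gphi that S_def by force
    show ?thesis using g(2) notA' inV code S_def by (intro exI[of _ g]) auto
  qed
  define f where "f x = (if x \<in> A then \<phi> x else (SOME y. y \<in> V - A' \<and> c' y = c x))" for x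
  have fVA: "f x \<in> V - A' \<and> c' (f x) = c x" if x: "x \<in> V - A" for x
  proof -
    have "card (V - A) = n - a" using AV fA a_def V_def by (simp add: card_Diff_subset)
    then have "card (V - A) \<ge> 2" using k kn a_def by simp
    moreover have "card (V - A - {x}) = card (V - A) - 1" using x by (simp add: V_def)
    ultimately have "card (V - A - {x}) \<ge> 1" by linarith
    then have "V - A - {x} \<noteq> {}" by (intro notI) simp
    then obtain w where w: "w \<in> V - A" "w \<noteq> x" by blast
    obtain g where "g x \<in> V - A' \<and> c' (g x) = c x" using step2[OF x w(1)] w(2) by blast
    then have "\<exists>y. y \<in> V - A' \<and> c' y = c x" by blast
    then have "(SOME y. y \<in> V - A' \<and> c' y = c x) \<in> V - A' \<and> c' (SOME y. y \<in> V - A' \<and> c' y = c x) = c x"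
      by (rule someI_ex)
    then show ?thesis unfolding f_def using x by simp
  qed
  have cinj: "c x = c y \<Longrightarrow> x \<in> V - A \<Longrightarrow> y \<in> V - A \<Longrightarrow> x = y" for x y
    using dc unfolding dcodes_def c_def V_def by blast
  have finj: "inj_on f (V - A)" unfolding inj_on_def using fVA cinj by metis
  have fimg: "f ` (V - A) = V - A'"
  proof (rule card_subset_eq)
    show "finite (V - A')" by (simp add: V_def)
    show "f ` (V - A) \<subseteq> V - A'" using fVA by blast
    have "card (V - A') = n - a" using A' by (simp add: card_Diff_subset V_def finite_subset)
    moreover have "card (V - A) = n - a" using AV fA a_def V_def by (simp add: card_Diff_subset)
    ultimately show "card (f ` (V - A)) = card (V - A')" using card_image[OF finj] by simp
  qed
  have c'inj: "c' y1 = c' y2 \<Longrightarrow> y1 \<in> V - A' \<Longrightarrow> y2 \<in> V - A' \<Longrightarrow> y1 = y2" for y1 y2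
  proof -
    assume h: "c' y1 = c' y2" "y1 \<in> V - A'" "y2 \<in> V - A'"
    then obtain x1 x2 where "x1 \<in> V - A" "x2 \<in> V - A" "y1 = f x1" "y2 = f x2" using fimg by (metis imageE)
    then show "y1 = y2" using h fVA cinj by metis
  qed
  have fA': "f ` A = A'" using \<phi>(1) unfolding f_def bij_betw_def by auto
  have fV: "f ` V = V"
  proof -
    have "V = A \<union> (V - A)" using AV by blast
    then have "f ` V = f ` A \<union> f ` (V - A)" by (metis image_Un)
    then show ?thesis using fA' fimg A'(1) by blast
  qed
  have finjV: "inj_on f V"
    by (rule eq_card_imp_inj_on) (use fV V_def in auto)
  have edges: "{x, y} \<in> E \<longleftrightarrow> {f x, f y} \<in> E'" if xy: "x \<in> V" "y \<in> V" for x y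
  proof (cases "x = y")
    case True
    then show ?thesis using E E' unfolding graphs_on_def by auto
  next
    case ne: False
    show ?thesis
    proof (cases "x \<in> A")
      case xA: True
      show ?thesis
      proof (cases "y \<in> A")
        case True
        then show ?thesis using xA \<phi>(2) f_def by simp
      next
        case False
        then have h: "c' (f y) = c y" using fVA xy by blast
        have "{x, y} \<in> E \<longleftrightarrow> x \<in> c y" unfolding c_def using xA by simp
        also have "\<dots> \<longleftrightarrow> x \<in> c' (f y)" using h by simp
        also have "\<dots> \<longleftrightarrow> {f x, f y} \<in> E'" unfolding c'_def f_def using xA by simp
        finally show ?thesis .
      qed
    next
      case xA: False
      show ?thesis
      proof (cases "y \<in> A")
        case True
        then have h: "c' (f x) = c x" using fVA xy xA by blast
        have "{x, y} \<in> E \<longleftrightarrow> y \<in> c x" unfolding c_def using True by (simp add: insert_commute)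
        also have "\<dots> \<longleftrightarrow> y \<in> c' (f x)" using h by simp
        also have "\<dots> \<longleftrightarrow> {f y, f x} \<in> E'" unfolding c'_def f_def using True by simp
        finally show ?thesis by (simp add: insert_commute)
      next
        case yA: False
        obtain g where g: "\<forall>x'\<in>A\<union>{x,y}. \<forall>y'\<in>A\<union>{x,y}. {x', y'} \<in> E \<longleftrightarrow> {g x', g y'} \<in> E'"
          "g x \<in> V - A'" "g y \<in> V - A'" "c' (g x) = c x" "c' (g y) = c y"
          using step2[of x y] xy xA yA ne by blast
        have "g x = f x" using c'inj[of "g x" "f x"] g fVA xy xA by auto
        moreover have "g y = f y" using c'inj[of "g y" "f y"] g fVA xy yA by auto
        ultimately show ?thesis using g(1) by auto
      qed
    qed
  qed
  have "graph_iso ({0..<n}, E) ({0..<n}, E')"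
    unfolding graph_iso_def using finjV fV edges V_def by (intro exI[of _ f]) (auto simp: bij_betw_def)
  then show "graph_iso ({0..<n}, E') ({0..<n}, E)" by (rule graph_iso_sym)
qed

definition pairs :: "nat \<Rightarrow> nat set set" where
  "pairs n = {e. e \<subseteq> {0..<n} \<and> card e = 2}"

lemma finite_pairs[simp]: "finite (pairs n)"
  unfolding pairs_def by (rule finite_subset[of _ "Pow {0..<n}"]) auto

lemma graphs_on_Pow: "graphs_on n = Pow (pairs n)"
  unfolding graphs_on_def pairs_def by auto

lemma core_card:
  assumes P: "finite P" and Q: "Q \<subseteq> P" and piQ: "\<pi> ` Q \<subseteq> P" and inj: "inj_on \<pi> Q"
    and disj: "Q \<inter> \<pi> ` Q = {}"
  shows "card {E \<in> Pow P. \<forall>q\<in>Q. q \<in> E \<longleftrightarrow> \<pi> q \<in> E} = 2 ^ (card P - card Q)"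
proof -
  let ?L = "{E \<in> Pow P. \<forall>q\<in>Q. q \<in> E \<longleftrightarrow> \<pi> q \<in> E}"
  have "bij_betw (\<lambda>E. E - \<pi> ` Q) ?L (Pow (P - \<pi> ` Q))"
  proof (rule bij_betwI[where g = "\<lambda>F. F \<union> \<pi> ` (F \<inter> Q)"])
    show "(\<lambda>E. E - \<pi> ` Q) \<in> ?L \<rightarrow> Pow (P - \<pi> ` Q)" by auto
    show "(\<lambda>F. F \<union> \<pi> ` (F \<inter> Q)) \<in> Pow (P - \<pi> ` Q) \<rightarrow> ?L"
    proof
      fix F assume F: "F \<in> Pow (P - \<pi> ` Q)"
      have "F \<union> \<pi> ` (F \<inter> Q) \<subseteq> P" using F piQ by auto
      moreover have "q \<in> F \<union> \<pi> ` (F \<inter> Q) \<longleftrightarrow> \<pi> q \<in> F \<union> \<pi> ` (F \<inter> Q)" if q: "q \<in> Q" for q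
      proof -
        have "q \<notin> \<pi> ` (F \<inter> Q)" using q disj by blast
        moreover have "\<pi> q \<notin> F" using F q by blast
        moreover have "\<pi> q \<in> \<pi> ` (F \<inter> Q) \<longleftrightarrow> q \<in> F"
          using inj q unfolding inj_on_def by blast
        ultimately show ?thesis by blast
      qed
      ultimately show "F \<union> \<pi> ` (F \<inter> Q) \<in> ?L" by blast
    qed
    show "(E - \<pi> ` Q) \<union> \<pi> ` ((E - \<pi> ` Q) \<inter> Q) = E" if E: "E \<in> ?L" for E
    proof -
      have "(E - \<pi> ` Q) \<inter> Q = E \<inter> Q" using disj by blast
      moreover have "\<pi> ` (E \<inter> Q) = E \<inter> \<pi> ` Q" using E by blast
      ultimately show ?thesis by blast
    qed
    show "(F \<union> \<pi> ` (F \<inter> Q)) - \<pi> ` Q = F" if F: "F \<in> Pow (P - \<pi> ` Q)" for F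
      using F by blast
  qed
  then have "card ?L = card (Pow (P - \<pi> ` Q))" by (rule bij_betw_same_card)
  also have "\<dots> = 2 ^ card (P - \<pi> ` Q)" using P by (simp add: card_Pow)
  also have "card (P - \<pi> ` Q) = card P - card Q"
    using P piQ card_image[OF inj] by (simp add: card_Diff_subset finite_subset)
  finally show ?thesis .
qed

lemma sub_bound:
  assumes B: "B \<subseteq> {0..<n}" and inj: "inj_on \<psi> B" and psiB: "\<psi> ` B \<subseteq> {0..<n}"
    and Q: "Q \<subseteq> {e. e \<subseteq> B \<and> card e = 2}" and disj: "Q \<inter> image \<psi> ` Q = {}"
  shows "card {E \<in> Pow (pairs n). \<forall>q\<in>Q. q \<in> E \<longleftrightarrow> \<psi> ` q \<in> E} = 2 ^ (card (pairs n) - card Q)"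
proof (rule core_card)
  show "Q \<subseteq> pairs n" using Q B unfolding pairs_def by auto
  show "image \<psi> ` Q \<subseteq> pairs n"
  proof
    fix X assume "X \<in> image \<psi> ` Q"
    then obtain q where q: "q \<in> Q" "X = \<psi> ` q" by blast
    have "inj_on \<psi> q" using inj q Q inj_on_subset by blast
    then have "card X = 2" using q Q card_image by fastforce
    moreover have "X \<subseteq> {0..<n}" using q Q psiB by blast
    ultimately show "X \<in> pairs n" unfolding pairs_def by simp
  qed
  show "inj_on (image \<psi>) Q"
    by (rule inj_on_subset[OF inj_on_image_Pow[OF inj]]) (use Q in auto)
qed (use disj in auto)

lemma sub_bound_le:
  assumes B: "B \<subseteq> {0..<n}" and inj: "inj_on \<psi> B" and psiB: "\<psi> ` B \<subseteq> {0..<n}"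
    and Q: "Q \<subseteq> {e. e \<subseteq> B \<and> card e = 2}" and disj: "Q \<inter> image \<psi> ` Q = {}"
  shows "card Q \<le> card (pairs n)"
proof -
  have "Q \<subseteq> pairs n" using Q B unfolding pairs_def by auto
  then show ?thesis by (simp add: card_mono)
qed

lemma emb_bound:
  assumes A: "A \<subseteq> {0..<n}" and inj: "inj_on \<psi> A" and psiA: "\<psi> ` A \<subseteq> {0..<n}"
    and Q: "Q \<subseteq> {e. e \<subseteq> A \<and> card e = 2}" and disj: "Q \<inter> image \<psi> ` Q = {}"
  shows "card {E \<in> Pow (pairs n). emb E A \<psi>} \<le> 2 ^ (card (pairs n) - card Q)"
proof -
  have "{E \<in> Pow (pairs n). emb E A \<psi>} \<subseteq> {E \<in> Pow (pairs n). \<forall>q\<in>Q. q \<in> E \<longleftrightarrow> \<psi> ` q \<in> E}"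
  proof (intro subsetI)
    fix E assume E: "E \<in> {E \<in> Pow (pairs n). emb E A \<psi>}"
    have "q \<in> E \<longleftrightarrow> \<psi> ` q \<in> E" if q: "q \<in> Q" for q
    proof -
      obtain u v where uv: "q = {u, v}" "u \<noteq> v" using q Q by (auto simp: card_2_iff)
      have "u \<in> A" "v \<in> A" using uv q Q by auto
      then show ?thesis using E uv unfolding emb_def by auto
    qed
    then show "E \<in> {E \<in> Pow (pairs n). \<forall>q\<in>Q. q \<in> E \<longleftrightarrow> \<psi> ` q \<in> E}" using E by blast
  qed
  then have "card {E \<in> Pow (pairs n). emb E A \<psi>} \<le> card {E \<in> Pow (pairs n). \<forall>q\<in>Q. q \<in> E \<longleftrightarrow> \<psi> ` q \<in> E}"
    by (intro card_mono) auto
  also have "\<dots> = 2 ^ (card (pairs n) - card Q)" by (rule sub_bound[OF A inj psiA Q disj])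
  finally show ?thesis .
qed

lemma card_ordered_pairs_le:
  assumes "card e = 2"
  shows "card {(u, w). u \<in> e \<and> w \<in> e \<and> u \<noteq> w} \<le> 2"
proof -
  obtain x y where e: "e = {x, y}" "x \<noteq> y" using assms by (auto simp: card_2_iff)
  then have "{(u, w). u \<in> e \<and> w \<in> e \<and> u \<noteq> w} = {(x, y), (y, x)}" by auto
  moreover have "card {(x, y), (y, x)} \<le> 2"
    by (rule order_trans[OF card_insert_le_m1]) auto
  ultimately show ?thesis by simp
qed

lemma Q1_exists:
  assumes fA: "finite A" and inj: "inj_on \<psi> A"
  shows "\<exists>Q. Q \<subseteq> {e. e \<subseteq> A \<and> card e = 2} \<and> Q \<inter> image \<psi> ` Q = {}
     \<and> card {u\<in>A. \<psi> u \<notin> A} * (card A - 1) \<le> 2 * card Q"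
proof -
  define M1 where "M1 = {u\<in>A. \<psi> u \<notin> A}"
  define Q where "Q = {e. e \<subseteq> A \<and> card e = 2 \<and> e \<inter> M1 \<noteq> {}}"
  have fQ: "finite Q" unfolding Q_def by (rule finite_subset[of _ "Pow A"]) (use fA in auto)
  have disj: "Q \<inter> image \<psi> ` Q = {}"
  proof (rule ccontr)
    assume "Q \<inter> image \<psi> ` Q \<noteq> {}"
    then obtain e where e: "e \<in> Q" "\<psi> ` e \<in> Q" by blast
    then obtain u where "u \<in> e" "u \<in> M1" unfolding Q_def by blast
    then have "\<psi> u \<in> \<psi> ` e" "\<psi> u \<notin> A" unfolding M1_def by auto
    then show False using e(2) unfolding Q_def by blast
  qed
  define D where "D = Sigma M1 (\<lambda>u. A - {u})"
  have fM1: "finite M1" using fA unfolding M1_def by simp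
  have "card D = (\<Sum>u\<in>M1. card (A - {u}))" unfolding D_def using fM1 fA by (simp add: card_SigmaI)
  also have "\<dots> = (\<Sum>u\<in>M1. card A - 1)"
    by (rule sum.cong[OF refl]) (use fA in \<open>auto simp: M1_def\<close>)
  also have "\<dots> = card M1 * (card A - 1)" by simp
  finally have cD: "card D = card M1 * (card A - 1)" .
  have "D \<subseteq> (\<Union>e\<in>Q. {(u, w). u \<in> e \<and> w \<in> e \<and> u \<noteq> w})"
  proof
    fix p assume "p \<in> D"
    then obtain u w where p: "p = (u, w)" "u \<in> M1" "w \<in> A" "w \<noteq> u" unfolding D_def by auto
    have "{u, w} \<in> Q" using p unfolding Q_def M1_def by auto
    then show "p \<in> (\<Union>e\<in>Q. {(u, w). u \<in> e \<and> w \<in> e \<and> u \<noteq> w})" using p by blast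
  qed
  moreover have "(\<Union>e\<in>Q. {(u, w). u \<in> e \<and> w \<in> e \<and> u \<noteq> w}) \<subseteq> A \<times> A"
    unfolding Q_def by blast
  then have "finite (\<Union>e\<in>Q. {(u, w). u \<in> e \<and> w \<in> e \<and> u \<noteq> w})"
    using fA finite_subset by blast
  ultimately have "card D \<le> card (\<Union>e\<in>Q. {(u, w). u \<in> e \<and> w \<in> e \<and> u \<noteq> w})"
    by (simp add: card_mono)
  also have "\<dots> \<le> (\<Sum>e\<in>Q. card {(u, w). u \<in> e \<and> w \<in> e \<and> u \<noteq> w})" by (rule card_UN_le[OF fQ])
  also have "\<dots> \<le> (\<Sum>e\<in>Q. 2)" by (rule sum_mono) (auto simp: Q_def intro: card_ordered_pairs_le)
  also have "\<dots> = 2 * card Q" by simp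
  finally have "card M1 * (card A - 1) \<le> 2 * card Q" using cD by simp
  moreover have "Q \<subseteq> {e. e \<subseteq> A \<and> card e = 2}" unfolding Q_def by auto
  ultimately show ?thesis using disj unfolding M1_def by blast
qed

lemma greedy:
  assumes "finite M" "inj_on \<psi> M" "\<forall>x\<in>M. \<psi> x \<noteq> x"
  shows "\<exists>M0\<subseteq>M. \<psi> ` M0 \<inter> M0 = {} \<and> card M \<le> 3 * card M0"
  using assms
proof (induction "card M" arbitrary: M rule: less_induct)
  case less
  show ?case
  proof (cases "M = {}")
    case True
    then show ?thesis by auto
  next
    case False
    then obtain u where u: "u \<in> M" by blast
    define R where "R = {x\<in>M. \<psi> x = u}"
    have cR: "card R \<le> 1"
    proof -
      have "finite R" using less.prems(1) unfolding R_def by simp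
      moreover have "\<forall>a1\<in>R. \<forall>a2\<in>R. a1 = a2" using less.prems(2) unfolding R_def inj_on_def by auto
      ultimately show ?thesis using card_le_Suc0_iff_eq by (metis One_nat_def)
    qed
    define M' where "M' = M - {u} - {\<psi> u} - R"
    have "M \<subseteq> M' \<union> ({u, \<psi> u} \<union> R)" unfolding M'_def by blast
    then have "card M \<le> card (M' \<union> ({u, \<psi> u} \<union> R))"
      by (rule card_mono[rotated]) (use less.prems(1) in \<open>auto simp: M'_def R_def\<close>)
    also have "\<dots> \<le> card M' + card ({u, \<psi> u} \<union> R)" by (rule card_Un_le)
    also have "card ({u, \<psi> u} \<union> R) \<le> card {u, \<psi> u} + card R" by (rule card_Un_le)
    also have "card {u, \<psi> u} \<le> 2" by (simp add: card_insert_if)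
    finally have cM: "card M \<le> card M' + 3" using cR by linarith
    have sub: "M' \<subset> M" unfolding M'_def using u by blast
    have "card M' < card M" using psubset_card_mono[OF less.prems(1) sub] .
    have subM: "M' \<subseteq> M" using sub by blast
    have h2: "finite M'" using less.prems(1) subM by (rule finite_subset[rotated])
    have h3: "inj_on \<psi> M'" using inj_on_subset[OF less.prems(2) subM] .
    have h4: "\<forall>x\<in>M'. \<psi> x \<noteq> x" using less.prems(3) subM by blast
    have "\<exists>M0\<subseteq>M'. \<psi> ` M0 \<inter> M0 = {} \<and> card M' \<le> 3 * card M0"
      by (rule less.hyps[OF \<open>card M' < card M\<close> h2 h3 h4])
    then obtain M0' where M0': "M0' \<subseteq> M'" "\<psi> ` M0' \<inter> M0' = {}" "card M' \<le> 3 * card M0'"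
      by blast
    define M0 where "M0 = insert u M0'"
    have uM0': "u \<notin> M0'" using M0'(1) unfolding M'_def by blast
    have "\<psi> ` M0 \<inter> M0 = {}"
    proof -
      have "\<psi> u \<noteq> u" using less.prems(3) u by blast
      moreover have "\<psi> u \<notin> M0'" using M0'(1) unfolding M'_def by blast
      moreover have "\<psi> x \<noteq> u" if "x \<in> M0'" for x using that M0'(1) unfolding M'_def R_def by blast
      moreover have "\<psi> x \<notin> M0'" if "x \<in> M0'" for x using that M0'(2) by blast
      ultimately show ?thesis unfolding M0_def by auto
    qed
    moreover have "card M0 = card M0' + 1"
    proof -
      have "finite M0'" using M0'(1) h2 by (rule finite_subset)
      then show ?thesis unfolding M0_def using uM0' by simp
    qed
    moreover have "M0 \<subseteq> M" using M0'(1) u subM unfolding M0_def by blast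
    ultimately show ?thesis using cM M0'(3) by (intro exI[of _ M0]) auto
  qed
qed

lemma Q2_exists:
  assumes fA: "finite A" and inj: "inj_on \<psi> A" and a6: "card A \<ge> 6"
  shows "\<exists>Q. Q \<subseteq> {e. e \<subseteq> A \<and> card e = 2} \<and> Q \<inter> image \<psi> ` Q = {}
     \<and> card {u\<in>A. \<psi> u \<noteq> u} * card A \<le> 16 * card Q"
proof -
  define M where "M = {u\<in>A. \<psi> u \<noteq> u}"
  have MA: "M \<subseteq> A" unfolding M_def by blast
  have fM: "finite M" using fA MA finite_subset by blast
  obtain M0 where M0: "M0 \<subseteq> M" "\<psi> ` M0 \<inter> M0 = {}" "card M \<le> 3 * card M0"
    using greedy[OF fM inj_on_subset[OF inj MA]] unfolding M_def by blast
  have "min (card M0) (card A div 4) \<le> card M0" by simp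
  then obtain M00 where M00: "M00 \<subseteq> M0" "card M00 = min (card M0) (card A div 4)" "finite M00"
    by (rule obtain_subset_with_card_n)
  have M00A: "M00 \<subseteq> A" using M00(1) M0(1) MA by blast
  have disj0: "\<psi> x \<notin> M00" if "x \<in> M00" for x using that M00(1) M0(2) by blast
  define W where "W = {w\<in>A. w \<notin> M00 \<and> \<psi> w \<notin> M00}"
  define Q where "Q = (\<lambda>(u, w). {u, w}) ` (M00 \<times> W)"
  have injp: "inj_on (\<lambda>(u, w). {u, w}) (M00 \<times> W)"
  proof (rule inj_onI)
    fix p1 p2 assume p1: "p1 \<in> M00 \<times> W" and p2: "p2 \<in> M00 \<times> W"
      and eq: "(\<lambda>(u, w). {u, w}) p1 = (\<lambda>(u, w). {u, w}) p2"
    obtain u1 w1 u2 w2 where "p1 = (u1, w1)" "p2 = (u2, w2)" by (cases p1, cases p2)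
    then show "p1 = p2" using p1 p2 eq unfolding W_def by (auto simp: doubleton_eq_iff)
  qed
  have cQ: "card Q = card M00 * card W"
    unfolding Q_def using card_image[OF injp] by (simp add: card_cartesian_product)
  have fW: "finite W" using fA unfolding W_def by simp
  have "A \<subseteq> W \<union> (M00 \<union> {w\<in>A. \<psi> w \<in> M00})" unfolding W_def by blast
  then have i1: "card A \<le> card (W \<union> (M00 \<union> {w\<in>A. \<psi> w \<in> M00}))"
    by (rule card_mono[rotated]) (use fW M00(3) fA in simp)
  have i2: "card (W \<union> (M00 \<union> {w\<in>A. \<psi> w \<in> M00})) \<le> card W + card (M00 \<union> {w\<in>A. \<psi> w \<in> M00})"
    by (rule card_Un_le)
  have i3: "card (M00 \<union> {w\<in>A. \<psi> w \<in> M00}) \<le> card M00 + card {w\<in>A. \<psi> w \<in> M00}"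
    by (rule card_Un_le)
  have i4: "card {w\<in>A. \<psi> w \<in> M00} \<le> card M00"
  proof (rule card_inj_on_le[OF _ _ M00(3)])
    have "{w \<in> A. \<psi> w \<in> M00} \<subseteq> A" by blast
    then show "inj_on \<psi> {w \<in> A. \<psi> w \<in> M00}" by (rule inj_on_subset[OF inj])
    show "\<psi> ` {w \<in> A. \<psi> w \<in> M00} \<subseteq> M00" by blast
  qed
  have cA: "card A \<le> card W + 2 * card M00" using i1 i2 i3 i4 by linarith
  have c4: "4 * card M00 \<le> card A" using M00(2) by simp
  have cW: "card A \<le> 2 * card W" using cA c4 by simp
  have c8: "card M \<le> 8 * card M00"
  proof (cases "card M0 \<le> card A div 4")
    case True
    then show ?thesis using M00(2) M0(3) by simp
  next
    case False
    then have "card M00 = card A div 4" using M00(2) by simp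
    moreover have "card M \<le> card A" using card_mono[OF fA MA] .
    ultimately show ?thesis using a6 by linarith
  qed
  have "card M * card A \<le> (8 * card M00) * (2 * card W)" using c8 cW by (rule mult_le_mono)
  then have bound: "card M * card A \<le> 16 * card Q" using cQ by simp
  have sub: "Q \<subseteq> {e. e \<subseteq> A \<and> card e = 2}"
    unfolding Q_def W_def using M00A by (auto simp: card_insert_if) 
  have disj: "Q \<inter> image \<psi> ` Q = {}"
  proof (rule ccontr)
    assume "Q \<inter> image \<psi> ` Q \<noteq> {}"
    then obtain e where e: "e \<in> Q" "\<psi> ` e \<in> Q" by blast
    have memQ: "\<exists>u w. u \<in> M00 \<and> w \<in> W \<and> X = {u, w}" if XQ: "X \<in> Q" for X
    proof -
      obtain p where p: "X = (\<lambda>(u, w). {u, w}) p" "p \<in> M00 \<times> W" using XQ unfolding Q_def by (rule imageE)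
      obtain u w where "p = (u, w)" by (cases p)
      then show ?thesis using p by auto
    qed
    obtain u w where uw: "u \<in> M00" "w \<in> W" "e = {u, w}" using memQ[OF e(1)] by blast
    obtain u' w' where uw': "u' \<in> M00" "w' \<in> W" "\<psi> ` e = {u', w'}" using memQ[OF e(2)] by blast
    have "u' \<in> \<psi> ` e" using uw' by blast
    then have "u' = \<psi> u \<or> u' = \<psi> w" using uw by blast
    then show False using uw uw' disj0 unfolding W_def by blast
  qed
  show ?thesis using sub disj bound unfolding M_def by blast
qed

lemma real_pow_diff: "q \<le> N \<Longrightarrow> real ((2::nat) ^ (N - q)) = 2 ^ N * 2 powr (- real q)"
proof -
  assume "q \<le> N"
  then have "real ((2::nat) ^ (N - q)) = 2 powr (real N - real q)"
    by (simp add: powr_realpow[symmetric] of_nat_diff)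
  also have "\<dots> = 2 ^ N * 2 powr (- real q)"
    by (simp add: powr_diff powr_minus divide_inverse powr_realpow)
  finally show ?thesis .
qed

lemma psi_bound:
  assumes A: "A \<subseteq> {0..<n}" and a6: "card A \<ge> 6" and inj: "inj_on \<psi> A" and psiA: "\<psi> ` A \<subseteq> {0..<n}"
  shows "real (card {E \<in> Pow (pairs n). emb E A \<psi>}) \<le> 2 ^ card (pairs n) *
     2 powr (- (2 * (real (card A) - 1) / 5 * real (card {u\<in>A. \<psi> u \<notin> A})
                + real (card A) / 80 * real (card {u\<in>A. \<psi> u \<noteq> u})))"
proof -
  have fA: "finite A" using A finite_subset by blast
  define t where "t = card {u\<in>A. \<psi> u \<notin> A}"
  define m where "m = card {u\<in>A. \<psi> u \<noteq> u}"
  define a where "a = card A"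
  define N where "N = card (pairs n)"
  define X where "X = card {E \<in> Pow (pairs n). emb E A \<psi>}"
  obtain Q1 where Q1: "Q1 \<subseteq> {e. e \<subseteq> A \<and> card e = 2}" "Q1 \<inter> image \<psi> ` Q1 = {}" "t * (a - 1) \<le> 2 * card Q1"
    using Q1_exists[OF fA inj] unfolding t_def a_def by blast
  obtain Q2 where Q2: "Q2 \<subseteq> {e. e \<subseteq> A \<and> card e = 2}" "Q2 \<inter> image \<psi> ` Q2 = {}" "m * a \<le> 16 * card Q2"
    using Q2_exists[OF fA inj a6] unfolding m_def a_def by blast
  have qle: "card Q \<le> N" if "Q \<subseteq> {e. e \<subseteq> A \<and> card e = 2}" for Q
  proof -
    have "Q \<subseteq> pairs n" using that A unfolding pairs_def by auto
    then show ?thesis unfolding N_def by (simp add: card_mono)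
  qed
  have X1: "real X \<le> 2 ^ N * 2 powr (- real (card Q1))"
  proof -
    have "X \<le> 2 ^ (N - card Q1)" unfolding X_def N_def by (rule emb_bound[OF A inj psiA Q1(1,2)])
    then have "real X \<le> real ((2::nat) ^ (N - card Q1))" by linarith
    also have "\<dots> = 2 ^ N * 2 powr (- real (card Q1))" by (rule real_pow_diff[OF qle[OF Q1(1)]])
    finally show ?thesis .
  qed
  have X2: "real X \<le> 2 ^ N * 2 powr (- real (card Q2))"
  proof -
    have "X \<le> 2 ^ (N - card Q2)" unfolding X_def N_def by (rule emb_bound[OF A inj psiA Q2(1,2)])
    then have "real X \<le> real ((2::nat) ^ (N - card Q2))" by linarith
    also have "\<dots> = 2 ^ N * 2 powr (- real (card Q2))" by (rule real_pow_diff[OF qle[OF Q2(1)]])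
    finally show ?thesis .
  qed
  define e where "e = (4 * real (card Q1) + real (card Q2)) / 5"
  have Xe: "real X \<le> 2 ^ N * 2 powr (- e)"
  proof (cases "card Q1 \<le> card Q2")
    case True
    then have "- real (card Q2) \<le> - e" unfolding e_def by simp
    then have "2 powr (- real (card Q2)) \<le> 2 powr (- e)" by simp
    then have "2 ^ N * 2 powr (- real (card Q2)) \<le> 2 ^ N * 2 powr (- e)" by (rule mult_left_mono) simp
    then show ?thesis using X2 by linarith
  next
    case False
    then have "- real (card Q1) \<le> - e" unfolding e_def by simp
    then have "2 powr (- real (card Q1)) \<le> 2 powr (- e)" by simp
    then have "2 ^ N * 2 powr (- real (card Q1)) \<le> 2 ^ N * 2 powr (- e)" by (rule mult_left_mono) simp
    then show ?thesis using X1 by linarith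
  qed
  have ra: "real (a - 1) = real a - 1" using a6 a_def by simp
  have "real t * (real a - 1) \<le> 2 * real (card Q1)"
    using Q1(3) ra by (metis of_nat_le_iff of_nat_mult of_nat_numeral)
  moreover have "real m * real a \<le> 16 * real (card Q2)"
    using Q2(3) by (metis of_nat_le_iff of_nat_mult of_nat_numeral)
  ultimately have "2 * (real a - 1) / 5 * real t + real a / 80 * real m \<le> e"
    unfolding e_def by (simp add: field_simps)
  then have "2 powr (- e) \<le> 2 powr (- (2 * (real a - 1) / 5 * real t + real a / 80 * real m))" by simp
  then have "2 ^ N * 2 powr (- e) \<le> 2 ^ N * 2 powr (- (2 * (real a - 1) / 5 * real t + real a / 80 * real m))"
    by (rule mult_left_mono) simp
  then have "real X \<le> 2 ^ N * 2 powr (- (2 * (real a - 1) / 5 * real t + real a / 80 * real m))"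
    using Xe by linarith
  then show ?thesis unfolding X_def N_def t_def m_def a_def .
qed

lemma sum_if_const: "finite A \<Longrightarrow> (\<Sum>u\<in>A. if P u then (c::real) else 0) = c * real (card {u\<in>A. P u})"
  by (simp add: sum.If_cases Int_def)

definition wt :: "nat set \<Rightarrow> real \<Rightarrow> real \<Rightarrow> nat \<Rightarrow> nat \<Rightarrow> real" where
  "wt A c1 c2 u x = 2 powr (- ((if x \<notin> A then c1 else 0) + (if x \<noteq> u then c2 else 0)))"

lemma prod_wt:
  assumes "finite A"
  shows "(\<Prod>u\<in>A. wt A c1 c2 u (\<psi> u)) =
    2 powr (- (c1 * real (card {u\<in>A. \<psi> u \<notin> A}) + c2 * real (card {u\<in>A. \<psi> u \<noteq> u})))"
proof -
  have "(\<Prod>u\<in>A. wt A c1 c2 u (\<psi> u)) = 2 powr (\<Sum>u\<in>A. - ((if \<psi> u \<notin> A then c1 else 0) + (if \<psi> u \<noteq> u then c2 else 0)))"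
    unfolding wt_def by (simp add: powr_sum)
  also have "(\<Sum>u\<in>A. - ((if \<psi> u \<notin> A then c1 else 0) + (if \<psi> u \<noteq> u then c2 else 0)))
      = - ((\<Sum>u\<in>A. if \<psi> u \<notin> A then c1 else 0) + (\<Sum>u\<in>A. if \<psi> u \<noteq> u then c2 else 0))"
    by (simp only: sum_negf[symmetric] sum.distrib[symmetric])
  also have "\<dots> = - (c1 * real (card {u\<in>A. \<psi> u \<notin> A}) + c2 * real (card {u\<in>A. \<psi> u \<noteq> u}))"
    using assms by (simp add: sum_if_const)
  finally show ?thesis .
qed

lemma sum_wt:
  assumes A: "A = {0..<a}" and an: "a \<le> n" and u: "u \<in> A" and c1: "c1 \<ge> 0" and c2: "c2 \<ge> 0"
  shows "(\<Sum>x\<in>{0..<n}. wt A c1 c2 u x) \<le> 1 + real a * 2 powr (- c2) + real n * 2 powr (- (c1 + c2))"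
proof -
  have "(\<Sum>x\<in>{0..<n}. wt A c1 c2 u x) \<le> (\<Sum>x\<in>{0..<n}. (if x = u then 1 else 0) + (if x \<in> A then 2 powr (- c2) else 0) + 2 powr (- (c1 + c2)))"
  proof (rule sum_mono)
    fix x assume "x \<in> {0..<n}"
    show "wt A c1 c2 u x \<le> (if x = u then 1 else 0) + (if x \<in> A then 2 powr (- c2) else 0) + 2 powr (- (c1 + c2))"
    proof (cases "x = u")
      case True
      then show ?thesis using u unfolding wt_def by simp
    next
      case False
      show ?thesis
      proof (cases "x \<in> A")
        case True
        then show ?thesis using False unfolding wt_def by simp
      next
        case xA: False
        then show ?thesis using False unfolding wt_def by simp
      qed
    qed
  qed
  also have "\<dots> = (\<Sum>x\<in>{0..<n}. if x = u then 1 else 0) + (\<Sum>x\<in>{0..<n}. if x \<in> A then 2 powr (- c2) else 0) + real n * 2 powr (- (c1 + c2))"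
    by (simp add: sum.distrib)
  also have "(\<Sum>x\<in>{0..<n}. if x = u then (1::real) else 0) = 1" using u A an by simp
  also have "(\<Sum>x\<in>{0..<n}. if x \<in> A then 2 powr (- c2) else 0) = 2 powr (- c2) * real (card {x\<in>{0..<n}. x \<in> A})"
    by (rule sum_if_const) simp
  also have "{x\<in>{0..<n}. x \<in> A} = A" using A an by auto
  finally show ?thesis using A by (simp add: mult.commute)
qed

lemma badR_bound:
  assumes A: "A = {0..<a}" and an: "a \<le> n" and a6: "6 \<le> a"
  shows "real (card {E \<in> Pow (pairs n). \<not> rigid n E A}) \<le> 2 ^ card (pairs n) *
    ((1 + real a * 2 powr (- (real a / 80)) + real n * 2 powr (- (2 * (real a - 1) / 5 + real a / 80))) ^ a - 1)"
proof -
  define c1 where "c1 = 2 * (real a - 1) / 5"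
  define c2 where "c2 = real a / 80"
  have c1p: "c1 \<ge> 0" "c2 \<ge> 0" using a6 unfolding c1_def c2_def by auto
  define N where "N = card (pairs n)"
  have fA: "finite A" "card A = a" using A by auto
  have AV: "A \<subseteq> {0..<n}" using A an by auto
  define \<Pi>A where "\<Pi>A = PiE A (\<lambda>_. {0..<n})"
  define \<Psi> where "\<Psi> = {\<psi> \<in> \<Pi>A. inj_on \<psi> A \<and> (\<exists>u\<in>A. \<psi> u \<noteq> u)}"
  have fPi: "finite \<Pi>A" unfolding \<Pi>A_def using fA by (simp add: finite_PiE)
  have fPsi: "finite \<Psi>" using fPi unfolding \<Psi>_def by simp
  have sub: "{E \<in> Pow (pairs n). \<not> rigid n E A} \<subseteq> (\<Union>\<psi>\<in>\<Psi>. {E \<in> Pow (pairs n). emb E A \<psi>})"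
  proof
    fix E assume E: "E \<in> {E \<in> Pow (pairs n). \<not> rigid n E A}"
    then obtain \<psi> where psi: "\<psi> ` A \<subseteq> {0..<n}" "inj_on \<psi> A" "emb E A \<psi>" "\<exists>u\<in>A. \<psi> u \<noteq> u"
      unfolding rigid_def by blast
    define \<phi> where "\<phi> = restrict \<psi> A"
    have "\<phi> \<in> \<Pi>A" unfolding \<phi>_def \<Pi>A_def using psi(1) by auto
    moreover have "inj_on \<phi> A" unfolding \<phi>_def using psi(2) by (simp add: inj_on_def)
    moreover have "\<exists>u\<in>A. \<phi> u \<noteq> u" unfolding \<phi>_def using psi(4) by simp
    moreover have "emb E A \<phi>" unfolding \<phi>_def using psi(3) by (simp add: emb_def)
    ultimately show "E \<in> (\<Union>\<psi>\<in>\<Psi>. {E \<in> Pow (pairs n). emb E A \<psi>})"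
      unfolding \<Psi>_def using E by blast
  qed
  have "card {E \<in> Pow (pairs n). \<not> rigid n E A} \<le> card (\<Union>\<psi>\<in>\<Psi>. {E \<in> Pow (pairs n). emb E A \<psi>})"
    by (rule card_mono[OF _ sub]) (simp add: fPsi)
  also have "\<dots> \<le> (\<Sum>\<psi>\<in>\<Psi>. card {E \<in> Pow (pairs n). emb E A \<psi>})" by (rule card_UN_le[OF fPsi])
  finally have c1b: "real (card {E \<in> Pow (pairs n). \<not> rigid n E A}) \<le> (\<Sum>\<psi>\<in>\<Psi>. real (card {E \<in> Pow (pairs n). emb E A \<psi>}))"
    by (simp only: of_nat_sum[symmetric] of_nat_le_iff)
  have c2b: "(\<Sum>\<psi>\<in>\<Psi>. real (card {E \<in> Pow (pairs n). emb E A \<psi>})) \<le> (\<Sum>\<psi>\<in>\<Psi>. 2 ^ N * (\<Prod>u\<in>A. wt A c1 c2 u (\<psi> u)))"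
  proof (rule sum_mono)
    fix \<psi> assume "\<psi> \<in> \<Psi>"
    then have psi: "\<psi> ` A \<subseteq> {0..<n}" "inj_on \<psi> A" unfolding \<Psi>_def \<Pi>A_def by auto
    show "real (card {E \<in> Pow (pairs n). emb E A \<psi>}) \<le> 2 ^ N * (\<Prod>u\<in>A. wt A c1 c2 u (\<psi> u))"
      using psi_bound[OF AV _ psi(2) psi(1)] fA a6 unfolding prod_wt[OF fA(1)] N_def c1_def c2_def by simp
  qed
  have wpos: "0 \<le> (\<Prod>u\<in>A. wt A c1 c2 u (\<psi> u))" for \<psi> by (rule prod_nonneg) (simp add: wt_def)
  have idPi: "restrict id A \<in> \<Pi>A" unfolding \<Pi>A_def using AV by auto
  have idw: "(\<Prod>u\<in>A. wt A c1 c2 u (restrict id A u)) = 1" by (rule prod.neutral) (simp add: wt_def)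
  have "(\<Sum>\<psi>\<in>\<Psi>. (\<Prod>u\<in>A. wt A c1 c2 u (\<psi> u))) \<le> (\<Sum>\<psi>\<in>\<Pi>A - {restrict id A}. (\<Prod>u\<in>A. wt A c1 c2 u (\<psi> u)))"
  proof (rule sum_mono2)
    show "finite (\<Pi>A - {restrict id A})" using fPi by simp
    show "\<Psi> \<subseteq> \<Pi>A - {restrict id A}" unfolding \<Psi>_def by auto
  qed (rule wpos)
  also have "\<dots> = (\<Sum>\<psi>\<in>\<Pi>A. (\<Prod>u\<in>A. wt A c1 c2 u (\<psi> u))) - 1"
    using idPi idw fPi by (simp add: sum_diff1)
  also have "(\<Sum>\<psi>\<in>\<Pi>A. (\<Prod>u\<in>A. wt A c1 c2 u (\<psi> u))) = (\<Prod>u\<in>A. \<Sum>x\<in>{0..<n}. wt A c1 c2 u x)"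
    unfolding \<Pi>A_def by (rule prod_sum_PiE[symmetric]) (use fA in auto)
  also have "\<dots> \<le> (\<Prod>u\<in>A. 1 + real a * 2 powr (- c2) + real n * 2 powr (- (c1 + c2)))"
    by (rule prod_mono) (use sum_wt[OF A an _ c1p] in \<open>auto intro: sum_nonneg simp: wt_def\<close>)
  also have "\<dots> = (1 + real a * 2 powr (- c2) + real n * 2 powr (- (c1 + c2))) ^ a"
    using fA by simp
  finally have c3: "(\<Sum>\<psi>\<in>\<Psi>. (\<Prod>u\<in>A. wt A c1 c2 u (\<psi> u))) \<le> (1 + real a * 2 powr (- c2) + real n * 2 powr (- (c1 + c2))) ^ a - 1"
    by simp
  have "(\<Sum>\<psi>\<in>\<Psi>. 2 ^ N * (\<Prod>u\<in>A. wt A c1 c2 u (\<psi> u))) = 2 ^ N * (\<Sum>\<psi>\<in>\<Psi>. (\<Prod>u\<in>A. wt A c1 c2 u (\<psi> u)))"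
    by (simp add: sum_distrib_left)
  also have "\<dots> \<le> 2 ^ N * ((1 + real a * 2 powr (- c2) + real n * 2 powr (- (c1 + c2))) ^ a - 1)"
    using c3 by (intro mult_left_mono) auto
  finally show ?thesis using c1b c2b unfolding N_def c1_def c2_def by linarith
qed

lemma badD_bound:
  assumes A: "A = {0..<a}" and an: "a < n"
  shows "card {E \<in> Pow (pairs n). \<not> dcodes n E A} \<le> n * n * 2 ^ (card (pairs n) - a)"
    and "a \<le> card (pairs n)"
proof -
  define N where "N = card (pairs n)"
  define J where "J = {p \<in> {0..<n} \<times> {0..<n}. fst p \<notin> A \<and> snd p \<notin> A \<and> fst p \<noteq> snd p}"
  define S where "S p = {E \<in> Pow (pairs n). \<forall>q\<in>(\<lambda>u. {u, fst p}) ` A. q \<in> E \<longleftrightarrow> (\<lambda>x. if x = fst p then snd p else x) ` q \<in> E}" for p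
  have fJ: "finite J" unfolding J_def by simp
  have cJ: "card J \<le> n * n"
  proof -
    have "card J \<le> card ({0..<n} \<times> {0..<n})" unfolding J_def by (rule card_mono) auto
    then show ?thesis by (simp add: card_cartesian_product)
  qed
  have Sp: "card (S p) = 2 ^ (N - a) \<and> a \<le> N" if p: "p \<in> J" for p
  proof -
    obtain v w where vw: "p = (v, w)" by (cases p)
    have v: "v < n" "v \<notin> A" "w < n" "w \<notin> A" "v \<noteq> w" using p vw unfolding J_def by auto
    define \<psi> where "\<psi> x = (if x = v then w else x)" for x
    define Q where "Q = (\<lambda>u. {u, v}) ` A"
    have B: "insert v A \<subseteq> {0..<n}" using v A an by auto
    have inj: "inj_on \<psi> (insert v A)" unfolding \<psi>_def inj_on_def using v by auto
    have psiB: "\<psi> ` insert v A \<subseteq> {0..<n}" unfolding \<psi>_def using v A an by auto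
    have Qs: "Q \<subseteq> {e. e \<subseteq> insert v A \<and> card e = 2}" unfolding Q_def using v by (auto simp: card_insert_if)
    have img: "\<psi> ` {u, v} = {u, w}" if "u \<in> A" for u unfolding \<psi>_def using that v by auto
    have disj: "Q \<inter> image \<psi> ` Q = {}"
    proof (rule ccontr)
      assume "Q \<inter> image \<psi> ` Q \<noteq> {}"
      then obtain u u' where uu: "u \<in> A" "u' \<in> A" "{u, v} = \<psi> ` {u', v}" unfolding Q_def by blast
      then have "{u, v} = {u', w}" using img by simp
      then show False using uu v by (auto simp: doubleton_eq_iff)
    qed
    have cQ: "card Q = a" unfolding Q_def using A v
      by (subst card_image) (auto simp: inj_on_def doubleton_eq_iff)
    have "S p = {E \<in> Pow (pairs n). \<forall>q\<in>Q. q \<in> E \<longleftrightarrow> \<psi> ` q \<in> E}"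
      unfolding S_def Q_def \<psi>_def vw by simp
    also have "card \<dots> = 2 ^ (N - card Q)" unfolding N_def by (rule sub_bound[OF B inj psiB Qs disj])
    finally have "card (S p) = 2 ^ (N - a)" using cQ by simp
    moreover have "Q \<subseteq> pairs n" using Qs B unfolding pairs_def by blast
    then have "card Q \<le> N" unfolding N_def by (simp add: card_mono)
    ultimately show ?thesis using cQ by simp
  qed
  show "a \<le> card (pairs n)"
  proof -
    have "(\<lambda>u. {u, a}) ` A \<subseteq> pairs n" unfolding pairs_def using A an by (auto simp: card_insert_if)
    then have "card ((\<lambda>u. {u, a}) ` A) \<le> card (pairs n)" by (simp add: card_mono)
    moreover have "card ((\<lambda>u. {u, a}) ` A) = a" using A
      by (subst card_image) (auto simp: inj_on_def doubleton_eq_iff)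
    ultimately show ?thesis by simp
  qed
  have sub: "{E \<in> Pow (pairs n). \<not> dcodes n E A} \<subseteq> (\<Union>p\<in>J. S p)"
  proof
    fix E assume E: "E \<in> {E \<in> Pow (pairs n). \<not> dcodes n E A}"
    then obtain v w where vw: "v \<in> {0..<n} - A" "w \<in> {0..<n} - A" "v \<noteq> w"
      "\<forall>u\<in>A. ({u, v} \<in> E) = ({u, w} \<in> E)"
      unfolding dcodes_def by blast
    have "(v, w) \<in> J" unfolding J_def using vw by auto
    moreover have "E \<in> S (v, w)"
    proof -
      have "(\<lambda>x. if x = v then w else x) ` {u, v} = {u, w}" if "u \<in> A" for u using that vw by auto
      then show ?thesis unfolding S_def using E vw by auto
    qed
    ultimately show "E \<in> (\<Union>p\<in>J. S p)" by blast
  qed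
  have "card {E \<in> Pow (pairs n). \<not> dcodes n E A} \<le> card (\<Union>p\<in>J. S p)"
    by (rule card_mono[OF _ sub]) (simp add: fJ S_def)
  also have "\<dots> \<le> (\<Sum>p\<in>J. card (S p))" by (rule card_UN_le[OF fJ])
  also have "\<dots> = (\<Sum>p\<in>J. 2 ^ (N - a))" using Sp by simp
  also have "\<dots> = card J * 2 ^ (N - a)" by simp
  also have "\<dots> \<le> n * n * 2 ^ (N - a)" using cJ by simp
  finally show "card {E \<in> Pow (pairs n). \<not> dcodes n E A} \<le> n * n * 2 ^ (card (pairs n) - a)"
    unfolding N_def .
qed

lemma main_bound:
  assumes k: "k = nat \<lceil>3 * log 2 (real n)\<rceil>" and a: "a = k - 2" and a6: "6 \<le> a" and kn: "k \<le> n"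
  shows "1 - ((1 + real a * 2 powr (- (real a / 80)) + real n * 2 powr (- (2 * (real a - 1) / 5 + real a / 80))) ^ a - 1)
           - real n * real n * 2 powr (- real a)
     \<le> real (card {E \<in> graphs_on n. reconstructible n k E}) / real (card (graphs_on n))"
proof -
  define A where "A = {0..<a}"
  define N where "N = card (pairs n)"
  define bR where "bR = (1 + real a * 2 powr (- (real a / 80)) + real n * 2 powr (- (2 * (real a - 1) / 5 + real a / 80))) ^ a - 1"
  define G where "G = {E \<in> graphs_on n. reconstructible n k E}"
  define R where "R = {E \<in> Pow (pairs n). \<not> rigid n E A}"
  define D where "D = {E \<in> Pow (pairs n). \<not> dcodes n E A}"
  have an: "a < n" using a a6 kn by simp
  have cA: "card A + 2 = k" unfolding A_def using a a6 by simp
  have AV: "A \<subseteq> {0..<n}" unfolding A_def using an by auto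
  have cG: "card (graphs_on n) = 2 ^ N" unfolding graphs_on_Pow N_def by (simp add: card_Pow)
  have "Pow (pairs n) \<subseteq> G \<union> (R \<union> D)"
  proof
    fix E assume E: "E \<in> Pow (pairs n)"
    show "E \<in> G \<union> (R \<union> D)"
    proof (cases "rigid n E A \<and> dcodes n E A")
      case True
      then have "reconstructible n k E"
        using recon[of E n A k] E AV cA kn unfolding graphs_on_Pow by blast
      then show ?thesis using E unfolding G_def graphs_on_Pow by blast
    next
      case False
      then show ?thesis using E unfolding R_def D_def by blast
    qed
  qed
  then have "card (Pow (pairs n)) \<le> card (G \<union> (R \<union> D))"
    by (rule card_mono[rotated]) (simp add: G_def R_def D_def graphs_on_Pow)
  also have "\<dots> \<le> card G + card (R \<union> D)" by (rule card_Un_le)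
  also have "card (R \<union> D) \<le> card R + card D" by (rule card_Un_le)
  finally have "2 ^ N \<le> card G + card R + card D"
    unfolding N_def by (simp add: card_Pow)
  then have "real (2 ^ N) \<le> real (card G + card R + card D)" by (simp only: of_nat_le_iff)
  then have tot: "2 ^ N \<le> real (card G) + real (card R) + real (card D)" by simp
  have Rb: "real (card R) \<le> 2 ^ N * bR" unfolding R_def N_def bR_def A_def
    using badR_bound[of A a n] an a6 A_def by simp
  have Db: "real (card D) \<le> real n * real n * (2 ^ N * 2 powr (- real a))"
  proof -
    have "card D \<le> n * n * 2 ^ (N - a)" unfolding D_def N_def A_def by (rule badD_bound(1)[OF refl an])
    then have "real (card D) \<le> real (n * n) * real ((2::nat) ^ (N - a))"
      by (metis of_nat_le_iff of_nat_mult)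
    also have "real ((2::nat) ^ (N - a)) = 2 ^ N * 2 powr (- real a)"
      by (rule real_pow_diff) (use badD_bound(2)[OF refl an] N_def in simp)
    finally show ?thesis by simp
  qed
  have pos: "(0::real) < 2 ^ N" by simp
  have "(1 - bR - real n * real n * 2 powr (- real a)) * 2 ^ N \<le> real (card G)"
  proof -
    have "(1 - bR - real n * real n * 2 powr (- real a)) * 2 ^ N
        = 2 ^ N - 2 ^ N * bR - real n * real n * (2 ^ N * 2 powr (- real a))"
      by (simp add: algebra_simps)
    then show ?thesis using tot Rb Db by linarith
  qed
  then have "1 - bR - real n * real n * 2 powr (- real a) \<le> real (card G) / 2 ^ N"
    using pos by (simp add: pos_le_divide_eq)
  then show ?thesis unfolding bR_def G_def cG by simp
qed

lemma p2: "(n::real) > 0 \<Longrightarrow> 2 powr (c * log 2 n) = n powr c"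
proof -
  assume n: "n > 0"
  have "n powr c = (2 powr log 2 n) powr c" using n by simp
  also have "\<dots> = 2 powr (log 2 n * c)" by (rule powr_powr)
  finally show ?thesis by (simp add: mult.commute)
qed

definition Ufun :: "nat \<Rightarrow> real" where
  "Ufun n = 9 * (log 2 n)^2 * 2 powr (1/40) * n powr (-3/80) + 3 * log 2 n * n * 2 powr (49/40) * n powr (-99/80)"

lemma final_bounds:
  assumes n2: "n \<ge> 2" and a: "a = nat \<lceil>3 * log 2 (real n)\<rceil> - 2"
  shows "(1 + real a * 2 powr (- (real a / 80)) + real n * 2 powr (- (2 * (real a - 1) / 5 + real a / 80))) ^ a - 1
           \<le> exp (Ufun n) - 1"
    and "real n * real n * 2 powr (- real a) \<le> 4 / real n"
proof -
  define L where "L = log 2 (real n)"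
  have npos: "real n > 0" using n2 by simp
  have L1: "L \<ge> 1" unfolding L_def using n2 by simp
  have ceil: "3 * L \<le> of_int \<lceil>3 * L\<rceil>" "of_int \<lceil>3 * L\<rceil> < 3 * L + 1" by linarith+
  have c3: "\<lceil>3 * L\<rceil> \<ge> 3" using L1 ceil by linarith
  have rk: "real (nat \<lceil>3 * L\<rceil>) = of_int \<lceil>3 * L\<rceil>" using c3 by simp
  have k2: "nat \<lceil>3 * L\<rceil> \<ge> 2" using c3 by linarith
  have "real a = real (nat \<lceil>3 * L\<rceil>) - 2" using a k2 unfolding L_def by (simp add: of_nat_diff)
  then have ra: "real a = of_int \<lceil>3 * L\<rceil> - 2" using rk by simp
  have alo: "real a \<ge> 3 * L - 2" and ahi: "real a \<le> 3 * L" using ra ceil by linarith+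
  define \<beta> where "\<beta> = 2 powr (- (real a / 80))"
  define \<gamma> where "\<gamma> = 2 powr (- (2 * (real a - 1) / 5 + real a / 80))"
  define y where "y = real a * \<beta> + real n * \<gamma>"
  have bpos: "\<beta> \<ge> 0" "\<gamma> \<ge> 0" unfolding \<beta>_def \<gamma>_def by auto
  have ypos: "y \<ge> 0" unfolding y_def using bpos by simp
  have "(1 + y) ^ a \<le> exp y ^ a"
    by (rule power_mono) (use ypos exp_ge_add_one_self[of y] in auto)
  also have "\<dots> = exp (real a * y)" by (simp add: exp_of_nat_mult)
  also have "real a * y \<le> Ufun n"
  proof -
    have "\<beta> \<le> 2 powr (- ((3 * L - 2) / 80))" unfolding \<beta>_def using alo by simp
    also have "\<dots> = 2 powr (1/40 + (-3/80) * L)" by (rule arg_cong[where f="\<lambda>x. 2 powr x"]) (simp add: field_simps)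
    also have "\<dots> = 2 powr (1/40) * 2 powr ((-3/80) * L)" by (rule powr_add)
    also have "2 powr ((-3/80) * L) = real n powr (-3/80)" unfolding L_def using npos by (rule p2)
    finally have b1: "\<beta> \<le> 2 powr (1/40) * real n powr (-3/80)" .
    have "- (2 * (real a - 1) / 5 + real a / 80) \<le> - (2 * ((3 * L - 2) - 1) / 5 + (3 * L - 2) / 80)"
      using alo by (simp add: field_simps)
    then have "\<gamma> \<le> 2 powr (- (2 * ((3 * L - 2) - 1) / 5 + (3 * L - 2) / 80))" unfolding \<gamma>_def by simp
    also have "\<dots> = 2 powr (49/40 + (-99/80) * L)" by (rule arg_cong[where f="\<lambda>x. 2 powr x"]) (simp add: field_simps)
    also have "\<dots> = 2 powr (49/40) * 2 powr ((-99/80) * L)" by (rule powr_add)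
    also have "2 powr ((-99/80) * L) = real n powr (-99/80)" unfolding L_def using npos by (rule p2)
    finally have g1: "\<gamma> \<le> 2 powr (49/40) * real n powr (-99/80)" .
    have a0: "real a \<ge> 0" by simp
    have "real a * real a \<le> (3 * L) * (3 * L)" using ahi a0 by (intro mult_mono) auto
    then have aa: "real a * real a \<le> 9 * L^2" by (simp add: power2_eq_square)
    have "real a * real a * \<beta> \<le> (9 * L^2) * (2 powr (1/40) * real n powr (-3/80))"
      by (rule mult_mono[OF aa b1]) (use bpos in auto)
    moreover have an: "real a * real n \<le> 3 * L * real n" using ahi by (intro mult_right_mono) auto
    have "real a * real n * \<gamma> \<le> (3 * L * real n) * (2 powr (49/40) * real n powr (-99/80))"
      by (rule mult_mono[OF an g1]) (use bpos L1 in auto)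
    ultimately show ?thesis unfolding y_def Ufun_def L_def by (simp add: algebra_simps)
  qed
  then have "exp (real a * y) \<le> exp (Ufun n)" by simp
  finally show "(1 + real a * 2 powr (- (real a / 80)) + real n * 2 powr (- (2 * (real a - 1) / 5 + real a / 80))) ^ a - 1
           \<le> exp (Ufun n) - 1" unfolding y_def \<beta>_def \<gamma>_def by (simp add: add.assoc)
  have "2 powr (- real a) \<le> 2 powr (- (3 * L - 2))" using alo by simp
  also have "\<dots> = 2 powr (2 + (-3) * L)" by (rule arg_cong[where f="\<lambda>x. 2 powr x"]) (simp add: field_simps)
  also have "\<dots> = 2 powr 2 * 2 powr ((-3) * L)" by (rule powr_add)
  also have "\<dots> = 4 * 2 powr ((-3) * L)" by simp
  also have "2 powr ((-3) * L) = real n powr (-3)" unfolding L_def using npos by (rule p2)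
  finally have "2 powr (- real a) \<le> 4 * real n powr (-3)" .
  then have "real n * real n * 2 powr (- real a) \<le> real n * real n * (4 * real n powr (-3))"
    by (intro mult_left_mono) auto
  also have "real n powr (-3) = 1 / real n ^ 3" using npos by (simp add: powr_minus powr_realpow divide_inverse)
  finally show "real n * real n * 2 powr (- real a) \<le> 4 / real n"
    using npos by (simp add: field_simps power3_eq_cube)
qed

theorem corollary2:
  shows "(\<lambda>n. real (card {E \<in> graphs_on n.
              reconstructible n (nat \<lceil>3 * log 2 (real n)\<rceil>) E})
            / real (card (graphs_on n))) \<longlonglongrightarrow> 1"
proof (rule tendsto_sandwich[where f = "\<lambda>n. 1 - (exp (Ufun n) - 1) - 4 / real n" and h = "\<lambda>_. 1"])
  show "((\<lambda>n. 1 - (exp (Ufun n) - 1) - 4 / real n) \<longlongrightarrow> 1) sequentially"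
    unfolding Ufun_def by real_asymp
  show "((\<lambda>_. 1) \<longlongrightarrow> (1::real)) sequentially" by simp
  show "\<forall>\<^sub>F n in sequentially. real (card {E \<in> graphs_on n. reconstructible n (nat \<lceil>3 * log 2 (real n)\<rceil>) E})
            / real (card (graphs_on n)) \<le> 1"
  proof (intro always_eventually allI)
    fix n
    have "card {E \<in> graphs_on n. reconstructible n (nat \<lceil>3 * log 2 (real n)\<rceil>) E} \<le> card (graphs_on n)"
      by (rule card_mono) (auto simp: graphs_on_Pow)
    moreover have "card (graphs_on n) > 0" by (simp add: graphs_on_Pow card_Pow)
    ultimately show "real (card {E \<in> graphs_on n. reconstructible n (nat \<lceil>3 * log 2 (real n)\<rceil>) E})
            / real (card (graphs_on n)) \<le> 1" by simp
  qed
  have e1: "eventually (\<lambda>n::nat. 3 * log 2 n + 1 \<le> n) sequentially" by real_asymp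
  have e2: "eventually (\<lambda>n::nat. 8 \<le> 3 * log 2 n) sequentially" by real_asymp
  have e3: "eventually (\<lambda>n::nat. 2 \<le> n) sequentially" by (rule eventually_ge_at_top)
  show "\<forall>\<^sub>F n in sequentially. 1 - (exp (Ufun n) - 1) - 4 / real n \<le>
      real (card {E \<in> graphs_on n. reconstructible n (nat \<lceil>3 * log 2 (real n)\<rceil>) E}) / real (card (graphs_on n))"
    using e1 e2 e3
  proof eventually_elim
    case (elim n)
    define k where "k = nat \<lceil>3 * log 2 (real n)\<rceil>"
    define a where "a = k - 2"
    have "of_int \<lceil>3 * log 2 (real n)\<rceil> < 3 * log 2 (real n) + 1" by linarith
    then have "real k \<le> real n" unfolding k_def using elim(1,2) by linarith
    then have kn: "k \<le> n" by simp
    have "3 * log 2 (real n) \<le> of_int \<lceil>3 * log 2 (real n)\<rceil>" by linarith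
    then have "real k \<ge> 8" unfolding k_def using elim(2) by linarith
    then have a6: "6 \<le> a" unfolding a_def by simp
    note mb = main_bound[OF k_def a_def a6 kn]
    have ak: "a = nat \<lceil>3 * log 2 (real n)\<rceil> - 2" unfolding a_def k_def ..
    note fb = final_bounds[OF elim(3) ak]
    show ?case using mb fb unfolding k_def by linarith
  qed
qed

end
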